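(* For any $A>1$, $\lambda\in[0,1]$, $n_0\in\mathbb{N}$ and any sequence $(\alpha_n)_{n\in\mathbb{N}}$ of positive numbers converging to $0$, there exist $n\ge n_0$ and $f=f_n\in C[-1,1]$ such that $f\ge0$ on $[-1,1]$, $f\equiv0$ on $[-1,-1/2]$, and every algebraic polynomial $P_n$ of degree $\le n$ which is nonnegative in some nonempty neighborhood of $\lambda$ and satisfies $P_n(\lambda)=f(\lambda)$ obeys $$\sup_{x\in[-1,1]}\frac{|f(x)-P_n(x)|}{\omega_3(f,\rho_n(x))}>A\,\alpha_n\sqrt n.$$
   Context: $\rho_n(x):=n^{-1}\sqrt{1-x^2}+n^{-2}$; $\omega_3(f,t)$ is the third modulus of smoothness of $f$ on $[-1,1]$. *)

theory Defs
  imports "HOL-Analysis.Analysis" "HOL-Computational_Algebra.Polynomial"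
begin

definition rho :: "nat \<Rightarrow> real \<Rightarrow> real" where
  "rho n x = sqrt (1 - x\<^sup>2) / real n + 1 / (real n)\<^sup>2"

definition diff3 :: "(real \<Rightarrow> real) \<Rightarrow> real \<Rightarrow> real \<Rightarrow> real" where
  "diff3 f h x = f (x + 3*h) - 3 * f (x + 2*h) + 3 * f (x + h) - f x"

definition omega3 :: "(real \<Rightarrow> real) \<Rightarrow> real \<Rightarrow> real" where
  "omega3 f t = Sup {\<bar>diff3 f h x\<bar> | h x. 0 < h \<and> h \<le> t \<and> -1 \<le> x \<and> x + 3*h \<le> 1}"

end

theory Submission
  imports Defs "HOL-Complex_Analysis.Complex_Analysis"
begin

lemma poly_map_of_real: "poly (map_poly of_real p) (of_real x :: complex) = of_real (poly p x)"
  by (induct p) (simp_all add: map_poly_pCons)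

lemma pderiv_map_of_real: "pderiv (map_poly (of_real :: real \<Rightarrow> complex) p) = map_poly of_real (pderiv p)"
  by (rule poly_eqI) (simp add: coeff_pderiv coeff_map_poly)

lemma degree_map_of_real: "degree (map_poly (of_real :: real \<Rightarrow> complex) p) = degree p"
  by (simp add: degree_map_poly)

lemma poly_sum_N:
  fixes x :: complex
  assumes "degree p \<le> N"
  shows "poly p x = (\<Sum>k\<le>N. coeff p k * x ^ k)"
proof -
  have "poly p x = (\<Sum>k\<le>degree p. coeff p k * x ^ k)" by (rule poly_altdef)
  also have "\<dots> = (\<Sum>k\<le>N. coeff p k * x ^ k)"
    by (rule sum.mono_neutral_left) (use assms in \<open>auto intro: le_degree\<close>)
  finally show ?thesis .
qed

lemma joukowski_root:
  fixes w :: complex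
  obtains z where "z \<noteq> 0" "norm z \<le> 1" "z + 1/z = 2*w"
proof -
  define s where "s = csqrt (w^2 - 1)"
  have s2: "s^2 = w^2 - 1" unfolding s_def by simp
  define z1 where "z1 = w + s"
  define z2 where "z2 = w - s"
  have prod: "z1 * z2 = 1" unfolding z1_def z2_def using s2 by (simp add: algebra_simps power2_eq_square)
  have sum: "z1 + z2 = 2*w" unfolding z1_def z2_def by simp
  have nz1: "z1 \<noteq> 0" and nz2: "z2 \<noteq> 0" using prod by auto
  have "norm z1 * norm z2 = 1" using prod by (metis norm_mult norm_one)
  then have "norm z1 \<le> 1 \<or> norm z2 \<le> 1"
  proof (rule contrapos_pp)
    assume "\<not> (norm z1 \<le> 1 \<or> norm z2 \<le> 1)"
    then have "1 < norm z1" "1 < norm z2" by auto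
    then have "1 < norm z1 * norm z2" by (metis less_1_mult)
    then show "norm z1 * norm z2 \<noteq> 1" by simp
  qed
  moreover have "1/z1 = z2" "1/z2 = z1" using prod nz1 nz2 by (auto simp: field_simps)
  ultimately show ?thesis using that nz1 nz2 sum by (metis add.commute)
qed

lemma joukowski_norm:
  fixes z :: complex
  assumes "z \<noteq> 0"
  shows "norm ((z + 1/z)/2 - 1) + norm ((z + 1/z)/2 + 1) = norm z + 1 / norm z"
proof -
  have e1: "(z + 1/z)/2 - 1 = (z - 1)^2 / (2*z)" using assms by (simp add: field_simps power2_eq_square)
  have e2: "(z + 1/z)/2 + 1 = (z + 1)^2 / (2*z)" using assms by (simp add: field_simps power2_eq_square)
  have par: "norm (z - 1)^2 + norm (z + 1)^2 = 2 * norm z ^2 + 2"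
    unfolding cmod_power2 by (simp add: power2_eq_square algebra_simps)
  have "norm ((z + 1/z)/2 - 1) + norm ((z + 1/z)/2 + 1) = (norm (z - 1)^2 + norm (z+1)^2) / (2 * norm z)"
    unfolding e1 e2 by (simp add: norm_divide norm_mult norm_power add_divide_distrib)
  also have "\<dots> = norm z + 1 / norm z" unfolding par using assms by (simp add: field_simps power2_eq_square)
  finally show ?thesis .
qed

lemma inv_sum_mono:
  fixes t R :: real
  assumes "t \<ge> 1" "R \<ge> 1" "t + 1/t \<le> R + 1/R"
  shows "t \<le> R"
proof (rule ccontr)
  assume "\<not> t \<le> R"
  then have tR: "R < t" by simp
  have "0 < (t - R) * (1 - 1/(t*R))"
  proof (rule mult_pos_pos)
    show "0 < t - R" using tR by simp
    have "t * 1 \<le> t * R" using assms by (intro mult_left_mono) auto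
    then have "1 < t * R" using tR assms by linarith
    then show "0 < 1 - 1/(t*R)" by simp
  qed
  also have "(t - R) * (1 - 1/(t*R)) = (t + 1/t) - (R + 1/R)"
    using assms by (simp add: field_simps)
  finally show False using assms by simp
qed

lemma bernstein_walsh:
  fixes C :: "complex poly"
  assumes deg: "degree C \<le> N" and bnd: "\<forall>s\<in>{-1..1}. norm (poly C (of_real s)) \<le> B"
    and R: "R \<ge> 1" and w: "norm (w - 1) + norm (w + 1) \<le> R + 1/R"
  shows "norm (poly C w) \<le> R^N * B"
proof -
  define F where "F z = (\<Sum>k\<le>N. coeff C k * z^(N-k) * ((z^2+1)/2)^k)" for z :: complex
  have Feq: "F z = z^N * poly C ((z + 1/z)/2)" if z: "z \<noteq> 0" for z
  proof -
    have "z^N * poly C ((z + 1/z)/2) = (\<Sum>k\<le>N. coeff C k * (z^N * ((z + 1/z)/2)^k))"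
      by (simp add: poly_sum_N[OF deg] sum_distrib_left algebra_simps)
    also have "\<dots> = F z" unfolding F_def
    proof (rule sum.cong[OF refl])
      fix k assume "k \<in> {..N}"
      then have kN: "k \<le> N" by simp
      have "z^N = z^(N-k) * z^k" using kN by (simp flip: power_add)
      moreover have "z^k * ((z + 1/z)/2)^k = ((z^2+1)/2)^k"
      proof -
        have zz: "z * ((z + 1/z)/2) = (z^2+1)/2" using z by (simp add: field_simps power2_eq_square)
        show ?thesis by (metis zz power_mult_distrib)
      qed
      ultimately show "coeff C k * (z^N * ((z + 1/z)/2)^k) = coeff C k * z^(N-k) * ((z^2+1)/2)^k"
        by (simp add: mult.assoc)
    qed
    finally show ?thesis by simp
  qed
  have hol: "F holomorphic_on A" for A unfolding F_def by (intro holomorphic_intros) auto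
  have B0: "B \<ge> 0" using bnd[rule_format, of 0] by (auto intro: order_trans[OF norm_ge_zero])
  have circ: "norm (F z) \<le> B" if "z \<in> sphere 0 1" for z
  proof -
    from that have nz: "norm z = 1" by simp
    then have z0: "z \<noteq> 0" by auto
    have zc: "z * cnj z = 1" using nz complex_norm_square[of z] by simp
    have "1/z = cnj z" using zc z0 by (simp add: divide_eq_eq mult.commute)
    then have "(z + 1/z)/2 = of_real (Re z)" by (simp add: complex_add_cnj)
    moreover have "Re z \<in> {-1..1}" using abs_Re_le_cmod[of z] nz by auto
    ultimately show ?thesis using Feq[OF z0] bnd nz by (simp add: norm_mult norm_power)
  qed
  have disk: "norm (F z) \<le> B" if "norm z \<le> 1" for z
  proof (rule maximum_modulus_frontier[of F "cball 0 1"])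
    show "F holomorphic_on interior (cball 0 1)" by (rule hol)
    show "continuous_on (closure (cball 0 1)) F" by (rule holomorphic_on_imp_continuous_on[OF hol])
    show "bounded (cball (0::complex) 1)" by simp
    show "\<And>z. z \<in> frontier (cball 0 1) \<Longrightarrow> norm (F z) \<le> B" using circ by simp
    show "z \<in> cball 0 1" using that by simp
  qed
  obtain z where z0: "z \<noteq> 0" and z1: "norm z \<le> 1" and zw: "z + 1/z = 2*w"
    by (rule joukowski_root)
  have wz: "w = (z + 1/z)/2" using zw by simp
  have "norm z + 1/norm z \<le> R + 1/R" using joukowski_norm[OF z0] w wz by simp
  then have t: "1/norm z \<le> R"
    using inv_sum_mono[of "1/norm z" R] z0 z1 R by (simp add: add.commute)
  have "poly C w = F z / z^N" unfolding wz Feq[OF z0] using z0 by simp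
  then have "norm (poly C w) = norm (F z) * (1/norm z)^N" by (simp add: norm_divide norm_power power_one_over)
  also have "\<dots> \<le> B * R^N"
    by (rule mult_mono[OF disk[OF z1] power_mono[OF t]]) (use B0 in auto)
  finally show ?thesis by (simp add: mult.commute)
qed

lemma deriv_bound_cauchy:
  fixes Q :: "real poly"
  assumes deg: "degree Q \<le> N" and bnd: "\<forall>s\<in>{-1..1}. \<bar>poly Q s\<bar> \<le> B" and R: "R \<ge> 1" and r: "r > 0"
   and geo: "\<forall>w::complex. norm (w - of_real x0) = r \<longrightarrow> norm (w-1) + norm (w+1) \<le> R + 1/R"
  shows "\<bar>poly (pderiv Q) x0\<bar> \<le> R^N * B / r"
proof -
  define C where "C = map_poly (of_real :: real \<Rightarrow> complex) Q"
  have degC: "degree C \<le> N" unfolding C_def using deg by (simp add: degree_map_of_real)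
  have bndC: "\<forall>s\<in>{-1..1}. norm (poly C (of_real s)) \<le> B"
    using bnd unfolding C_def by (simp add: poly_map_of_real)
  have hol: "poly C holomorphic_on A" for A by (intro holomorphic_intros)
  have "norm ((deriv ^^ 1) (poly C) (of_real x0)) \<le> fact 1 * (R^N * B) / r^1"
  proof (rule Cauchy_inequality)
    show "poly C holomorphic_on ball (of_real x0) r" by (rule hol)
    show "continuous_on (cball (of_real x0) r) (poly C)" by (rule holomorphic_on_imp_continuous_on[OF hol])
    show "0 < r" by (rule r)
    fix x :: complex assume "norm (of_real x0 - x) = r"
    then have "norm (x - of_real x0) = r" by (simp add: norm_minus_commute)
    then show "norm (poly C x) \<le> R^N * B"
      using bernstein_walsh[OF degC bndC R] geo by blast
  qed
  moreover have "deriv (poly C) (of_real x0) = of_real (poly (pderiv Q) x0)"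
  proof -
    have "deriv (poly C) (of_real x0) = poly (pderiv C) (of_real x0)"
      by (rule DERIV_imp_deriv) (rule poly_DERIV)
    also have "\<dots> = of_real (poly (pderiv Q) x0)"
      unfolding C_def pderiv_map_of_real by (rule poly_map_of_real)
    finally show ?thesis .
  qed
  ultimately show ?thesis by simp
qed

lemma one_plus_pow_le_exp:
  fixes t :: real assumes "t \<ge> 0"
  shows "(1 + t)^N \<le> exp (real N * t)"
proof -
  have "(1 + t)^N \<le> (exp t)^N" by (rule power_mono) (use assms in \<open>auto simp: add.commute exp_ge_add_one_self\<close>)
  also have "\<dots> = exp (real N * t)" by (simp add: exp_of_nat_mult)
  finally show ?thesis .
qed

lemma sqrt_bound_aux:
  fixes a v y r :: real
  assumes a: "a > 0" and v: "\<bar>v\<bar> \<le> r" and ra: "r \<le> a/2" and y: "v^2 + y^2 = r^2"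
  shows "sqrt ((a - v)^2 + y^2) \<le> a - v + r^2/a"
proof -
  have X: "a - v \<ge> a/2" using v ra by linarith
  have T0: "a - v + r^2/a \<ge> 0" using X a by (simp add: add_nonneg_nonneg)
  have y2: "y^2 \<le> r^2" using y by (metis le_add_same_cancel2 zero_le_power2)
  have "r^2 \<le> 2 * (a - v) * (r^2/a)"
  proof -
    have "2 * (a - v) / a \<ge> 1" using X a by (simp add: field_simps)
    then have "r^2 * 1 \<le> r^2 * (2 * (a - v) / a)" by (intro mult_left_mono) auto
    then show ?thesis by (simp add: field_simps)
  qed
  then have "(a - v)^2 + y^2 \<le> (a - v + r^2/a)^2"
  proof -
    have "(a - v + r^2/a)^2 = (a-v)^2 + 2*(a-v)*(r^2/a) + (r^2/a)^2" by (simp add: power2_eq_square algebra_simps)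
    moreover have "0 \<le> (r^2/a)^2" by simp
    ultimately show ?thesis using y2 \<open>r^2 \<le> 2 * (a - v) * (r^2/a)\<close> by linarith
  qed
  then have "sqrt ((a - v)^2 + y^2) \<le> sqrt ((a - v + r^2/a)^2)" by (rule real_sqrt_le_mono)
  also have "\<dots> = a - v + r^2/a" using T0 by simp
  finally show ?thesis .
qed

lemma bernstein_interior:
  fixes Q :: "real poly"
  assumes deg: "degree Q \<le> N" and N: "N \<ge> 1" and bnd: "\<forall>s\<in>{-1..1}. \<bar>poly Q s\<bar> \<le> B"
    and x0: "-1 < x0" "x0 < 1"
  shows "\<bar>poly (pderiv Q) x0\<bar> \<le> 6 * real N * B / min (1 - x0) (1 + x0)"
proof -
  define a where "a = 1 - x0"
  define c where "c = 1 + x0"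
  define d where "d = min a c"
  have a0: "a > 0" and c0: "c > 0" using x0 unfolding a_def c_def by auto
  have d0: "d > 0" and d1: "d \<le> 1" and da: "d \<le> a" and dc: "d \<le> c"
    using a0 c0 x0 unfolding d_def a_def c_def by auto
  define r where "r = d / (2 * N)"
  define R where "R = 1 + 1 / real N"
  have Npos: "real N \<ge> 1" using N by simp
  have r0: "r > 0" unfolding r_def using d0 Npos by simp
  have rd: "r \<le> d/2" unfolding r_def using d0 Npos by (simp add: field_simps)
  have R1: "R \<ge> 1" unfolding R_def by simp
  have B0: "B \<ge> 0" using bnd[rule_format, of 0] by auto
  have geo: "\<forall>w::complex. norm (w - of_real x0) = r \<longrightarrow> norm (w-1) + norm (w+1) \<le> R + 1/R"
  proof (intro allI impI)
    fix w :: complex assume wr: "norm (w - of_real x0) = r"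
    define v where "v = Re w - x0"
    define y where "y = Im w"
    have vy: "v^2 + y^2 = r^2" using wr unfolding v_def y_def
      by (metis Re_complex_of_real cmod_power2 Im_complex_of_real diff_zero minus_complex.simps)
    have vr: "\<bar>v\<bar> \<le> r"
    proof -
      have "v^2 \<le> r^2" using vy by (metis le_add_same_cancel1 zero_le_power2)
      then show ?thesis using r0 by (metis abs_le_square_iff abs_of_pos)
    qed
    have n1: "norm (w - 1) = sqrt ((a - v)^2 + y^2)"
      unfolding norm_complex_def a_def v_def y_def by (simp add: power2_commute)
    have n2: "norm (w + 1) = sqrt ((c - (-v))^2 + y^2)"
      unfolding norm_complex_def c_def v_def y_def by (simp add: algebra_simps)
    have b1: "norm (w - 1) \<le> a - v + r^2/a"
      unfolding n1 by (rule sqrt_bound_aux[OF a0 vr]) (use rd da vy in auto)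
    have b2: "norm (w + 1) \<le> c + v + r^2/c"
      unfolding n2 using sqrt_bound_aux[OF c0, of "-v" r y] vr rd dc vy by auto
    have "r^2/a \<le> r^2/d" using da d0 by (intro divide_left_mono) auto
    moreover have "r^2/c \<le> r^2/d" using dc d0 by (intro divide_left_mono) auto
    ultimately have "norm (w-1) + norm (w+1) \<le> 2 + 2 * r^2 / d"
      using b1 b2 unfolding a_def c_def by simp
    also have "2 * r^2 / d = d / (2 * N^2)" unfolding r_def using d0 by (simp add: field_simps power2_eq_square)
    also have "\<dots> \<le> 1 / (2 * N^2)" using d1 Npos by (simp add: divide_right_mono)
    also have "1 / (2 * N^2) \<le> 1 / (real N * (N + 1))"
    proof -
      have "real N * 1 \<le> real N * real N" using Npos by (intro mult_left_mono) auto
      then have "real N * (N + 1) \<le> 2 * (real N)^2" by (simp add: power2_eq_square algebra_simps)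
      then show ?thesis using Npos by (intro divide_left_mono) auto
    qed
    also have "2 + 1 / (real N * (N + 1)) = R + 1/R"
    proof -
      have "0 \<le> real N * real N" by simp
      then have nz: "real N + real N * real N \<noteq> 0" using Npos by linarith
      show ?thesis unfolding R_def using Npos nz by (simp add: field_simps)
    qed
    finally show "norm (w-1) + norm (w+1) \<le> R + 1/R" by simp
  qed
  have "\<bar>poly (pderiv Q) x0\<bar> \<le> R^N * B / r" by (rule deriv_bound_cauchy[OF deg bnd R1 r0 geo])
  also have "R^N \<le> 3"
  proof -
    have "R^N \<le> exp (real N * (1 / real N))" unfolding R_def by (rule one_plus_pow_le_exp) simp
    also have "\<dots> = exp 1" using Npos by simp
    also have "\<dots> \<le> 3" by (rule exp_le)
    finally show ?thesis .
  qed
  then have "R^N * B / r \<le> 3 * B / r" using B0 r0 by (intro divide_right_mono mult_right_mono) auto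
  also have "3 * B / r = 6 * real N * B / d" unfolding r_def using d0 Npos by (simp add: field_simps)
  finally show ?thesis unfolding d_def a_def c_def .
qed

lemma markov_endpoint:
  fixes Q :: "real poly"
  assumes deg: "degree Q \<le> N" and N: "N \<ge> 2" and bnd: "\<forall>s\<in>{-1..1}. \<bar>poly Q s\<bar> \<le> B"
  shows "\<bar>poly (pderiv Q) 1\<bar> \<le> 9 * (real N)^2 * B"
proof -
  have Npos: "real N \<ge> 2" using N by simp
  define r where "r = 1 / (real N)^2"
  define R where "R = 1 + 2 / real N"
  have r0: "r > 0" unfolding r_def using Npos by simp
  have R1: "R \<ge> 1" unfolding R_def by simp
  have R2: "R \<le> 2" unfolding R_def using Npos by (simp add: field_simps)
  have B0: "B \<ge> 0" using bnd[rule_format, of 0] by auto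
  have geo: "\<forall>w::complex. norm (w - of_real 1) = r \<longrightarrow> norm (w-1) + norm (w+1) \<le> R + 1/R"
  proof (intro allI impI)
    fix w :: complex assume wr: "norm (w - of_real 1) = r"
    have "norm (w + 1) \<le> norm (w - 1) + 2"
      using norm_triangle_ineq[of "w - 1" 2] by (simp add: add.commute)
    then have "norm (w-1) + norm (w+1) \<le> 2 + 2 * r" using wr by simp
    also have "2 * r \<le> (R - 1)^2 / R"
    proof -
      have "(R - 1)^2 / R \<ge> (R - 1)^2 / 2" using R1 R2 by (intro divide_left_mono) auto
      moreover have "(R - 1)^2 / 2 = 2 * r" unfolding R_def r_def by (simp add: field_simps power2_eq_square)
      ultimately show ?thesis by simp
    qed
    also have "2 + (R - 1)^2 / R = R + 1/R" using R1 by (simp add: field_simps power2_eq_square)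
    finally show "norm (w-1) + norm (w+1) \<le> R + 1/R" by simp
  qed
  have "\<bar>poly (pderiv Q) 1\<bar> \<le> R^N * B / r" using deriv_bound_cauchy[OF deg bnd R1 r0 geo] by simp
  also have "R^N \<le> 9"
  proof -
    have "R^N \<le> exp (real N * (2 / real N))" unfolding R_def by (rule one_plus_pow_le_exp) simp
    also have "\<dots> = exp 1 * exp 1" using Npos by (simp flip: exp_add)
    also have "\<dots> \<le> 3 * 3" by (rule mult_mono) (auto simp: exp_le)
    finally show ?thesis by simp
  qed
  then have "R^N * B / r \<le> 9 * B / r" using B0 r0 by (intro divide_right_mono mult_right_mono) auto
  also have "9 * B / r = 9 * (real N)^2 * B" unfolding r_def using Npos by (simp add: field_simps)
  finally show ?thesis .
qed

fun chebT :: "nat \<Rightarrow> real poly" where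
  "chebT 0 = 1"
| "chebT (Suc 0) = [:0,1:]"
| "chebT (Suc (Suc k)) = [:0,2:] * chebT (Suc k) - chebT k"

fun chebS :: "nat \<Rightarrow> real poly" where
  "chebS 0 = 0"
| "chebS (Suc 0) = 1"
| "chebS (Suc (Suc k)) = [:0,2:] * chebS (Suc k) - chebS k + [:2:]"

lemma chebT_cos: "poly (chebT k) (cos t) = cos (real k * t)"
proof (induct k rule: chebT.induct)
  case 1 then show ?case by simp
next
  case 2 then show ?case by simp
next
  case (3 k)
  have "cos (real (Suc (Suc k)) * t) + cos (real k * t) = 2 * cos t * cos (real (Suc k) * t)"
  proof -
    have a: "real (Suc (Suc k)) * t = real (Suc k) * t + t" by (simp add: algebra_simps)
    have b: "real k * t = real (Suc k) * t - t" by (simp add: algebra_simps)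
    show ?thesis unfolding a b cos_add cos_diff by simp
  qed
  then show ?case using 3 by (simp add: algebra_simps)
qed

lemma chebS_T: "poly (chebS k) x * (1 - x) = 1 - poly (chebT k) x"
proof (induct k rule: chebS.induct)
  case (3 k)
  have i1: "x * (poly (chebS (Suc k)) x * (1 - x)) = x * (1 - poly (chebT (Suc k)) x)" using 3(1) by simp
  show ?case using i1 3(2) by (simp add: algebra_simps)
qed simp_all

lemma chebS_one: "poly (chebS k) 1 = (real k)^2"
  by (induct k rule: chebS.induct) (simp_all add: algebra_simps power2_eq_square)

lemma degree_chebS: "degree (chebS k) \<le> k"
proof (induct k rule: chebS.induct)
  case (3 k)
  have "degree ([:0,2:] * chebS (Suc k)) \<le> Suc (Suc k)"
    using degree_mult_le[of "[:0,2:]" "chebS (Suc k)"] 3(1) by simp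
  moreover have "degree (chebS k) \<le> Suc (Suc k)" using 3(2) by simp
  moreover have "degree ([:2:] :: real poly) \<le> Suc (Suc k)" by simp
  ultimately show ?case
    by (simp only: chebS.simps) (intro degree_add_le degree_diff_le, auto)
qed auto

lemma sin_mult_le: "\<bar>sin (real k * t)\<bar> \<le> real k * \<bar>sin t\<bar>"
proof (induct k)
  case 0 then show ?case by simp
next
  case (Suc k)
  have e: "real (Suc k) * t = real k * t + t" by (simp add: algebra_simps)
  have "sin (real (Suc k) * t) = sin (real k * t) * cos t + cos (real k * t) * sin t"
    unfolding e sin_add by simp
  then have "\<bar>sin (real (Suc k) * t)\<bar> \<le> \<bar>sin (real k * t)\<bar> * \<bar>cos t\<bar> + \<bar>cos (real k * t)\<bar> * \<bar>sin t\<bar>"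
    by (simp add: abs_mult) (metis abs_mult abs_triangle_ineq)
  also have "\<dots> \<le> \<bar>sin (real k * t)\<bar> * 1 + 1 * \<bar>sin t\<bar>"
    by (intro add_mono mult_mono) auto
  also have "\<dots> \<le> real (Suc k) * \<bar>sin t\<bar>" using Suc by (simp add: algebra_simps)
  finally show ?case .
qed

lemma chebS_bounds:
  assumes "x \<in> {-1..1}"
  shows "0 \<le> poly (chebS k) x" "poly (chebS k) x \<le> (real k)^2" "(1 - x) * poly (chebS k) x \<le> 2"
proof -
  have all: "0 \<le> poly (chebS k) x \<and> poly (chebS k) x \<le> (real k)^2 \<and> (1 - x) * poly (chebS k) x \<le> 2"
  proof (cases "x = 1")
    case True then show ?thesis by (simp add: chebS_one)
  next
    case False
    then have x1: "x < 1" using assms by auto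
    define t where "t = arccos x"
    have ct: "cos t = x" unfolding t_def using assms by (simp add: cos_arccos)
    have eq: "(1 - x) * poly (chebS k) x = 1 - cos (real k * t)"
      using chebS_T[of k x] chebT_cos[of k t] ct by (simp add: mult.commute)
    have "1 - cos (real k * t) \<le> (real k)^2 * (1 - x)"
    proof -
      have h1: "1 - cos (real k * t) = 2 * (sin (real k * (t/2)))^2"
        using cos_double_sin[of "real k * (t/2)"] by (simp add: algebra_simps)
      have h2: "1 - x = 2 * (sin (t/2))^2"
        using cos_double_sin[of "t/2"] ct by simp
      have "(sin (real k * (t/2)))^2 \<le> (real k * \<bar>sin (t/2)\<bar>)^2"
        using sin_mult_le[of k "t/2"] by (metis abs_ge_zero power2_abs power_mono)
      then show ?thesis unfolding h1 h2 by (simp add: power_mult_distrib)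
    qed
    then have "(1 - x) * poly (chebS k) x \<le> (1 - x) * (real k)^2" using eq by (simp add: mult.commute)
    then have u: "poly (chebS k) x \<le> (real k)^2" using x1 by simp
    have "0 \<le> (1 - x) * poly (chebS k) x" unfolding eq by simp
    then have l: "0 \<le> poly (chebS k) x" using x1 by (simp add: zero_le_mult_iff)
    have "(1 - x) * poly (chebS k) x \<le> 2" unfolding eq using cos_ge_minus_one[of "real k * t"] by linarith
    then show ?thesis using u l by simp
  qed
  then show "0 \<le> poly (chebS k) x" "poly (chebS k) x \<le> (real k)^2" "(1 - x) * poly (chebS k) x \<le> 2" by auto
qed

definition gfun :: "real \<Rightarrow> real \<Rightarrow> real \<Rightarrow> real" where
  "gfun lam \<epsilon> x = (max 0 (x + 1/2))^3 * ((x - lam) * (x - lam + \<epsilon>))"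

definition ffun :: "real \<Rightarrow> real \<Rightarrow> real \<Rightarrow> real" where
  "ffun lam \<epsilon> x = max 0 (gfun lam \<epsilon> x)"

lemma gfun_neg_bound:
  assumes lam: "0 \<le> lam" "lam \<le> 1" and e: "0 < \<epsilon>" "\<epsilon> \<le> 1/2" and x: "x \<in> {-1..1}"
  shows "- gfun lam \<epsilon> x \<le> \<epsilon>^2"
proof (cases "(x - lam) * (x - lam + \<epsilon>) \<ge> 0")
  case True
  then have "gfun lam \<epsilon> x \<ge> 0" unfolding gfun_def by simp
  then show ?thesis using zero_le_power2[of \<epsilon>] by linarith
next
  case False
  define m where "m = max 0 (x + 1/2)"
  have m0: "0 \<le> m" and m1: "m \<le> 3/2" using x by (auto simp: m_def max_def)
  have m3: "m^3 \<le> 27/8"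
  proof -
    have "m^3 \<le> (3/2)^3" by (rule power_mono[OF m1 m0])
    moreover have "(3/2::real)^3 = 27/8" by (simp add: power3_eq_cube)
    ultimately show ?thesis by simp
  qed
  have q: "- ((x - lam) * (x - lam + \<epsilon>)) \<le> \<epsilon>^2/4"
  proof -
    have "0 \<le> (x - lam + \<epsilon>/2)^2" by simp
    then show ?thesis by (simp add: power2_eq_square algebra_simps)
  qed
  have qn: "0 \<le> - ((x - lam) * (x - lam + \<epsilon>))" using False by simp
  have "- gfun lam \<epsilon> x = m^3 * (- ((x - lam) * (x - lam + \<epsilon>)))" unfolding gfun_def m_def by simp
  also have "\<dots> \<le> 27/8 * (\<epsilon>^2/4)" by (rule mult_mono[OF m3 q]) (use qn in auto)
  also have "\<dots> \<le> \<epsilon>^2" by simp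
  finally show ?thesis .
qed

lemma ffun_minus_gfun:
  assumes lam: "0 \<le> lam" "lam \<le> 1" and e: "0 < \<epsilon>" "\<epsilon> \<le> 1/2" and x: "x \<in> {-1..1}"
  shows "0 \<le> ffun lam \<epsilon> x - gfun lam \<epsilon> x" "ffun lam \<epsilon> x - gfun lam \<epsilon> x \<le> \<epsilon>^2"
  using gfun_neg_bound[OF assms] unfolding ffun_def by (auto simp: max_def)

lemma diff3_poly_identity:
  fixes u h c \<epsilon> :: real
  defines "p \<equiv> \<lambda>v. v^3 * ((v - c) * (v - c + \<epsilon>))"
  shows "p (u + 3*h) - 3 * p (u + 2*h) + 3 * p (u + h) - p u
     = h^3 * (60*u^2 + 180*(u*h) + 150*h^2 - (2*c - \<epsilon>)*(24*u + 36*h) + 6*(c*(c - \<epsilon>)))"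
  unfolding p_def by (simp add: power3_eq_cube power2_eq_square algebra_simps)

lemma E_bound:
  fixes u h c \<epsilon> :: real
  assumes u: "0 \<le> u" "u + 3*h \<le> 3/2" and h: "0 < h" and c: "1/2 \<le> c" "c \<le> 3/2" and e: "0 < \<epsilon>" "\<epsilon> \<le> 1/2"
  shows "\<bar>60*u^2 + 180*(u*h) + 150*h^2 - (2*c - \<epsilon>)*(24*u + 36*h) + 6*(c*(c - \<epsilon>))\<bar> \<le> 1300"
proof -
  have u1: "u \<le> 3/2" and h1: "h \<le> 1/2" using u h by auto
  have a1: "u^2 \<le> 9/4" using mult_mono[OF u1 u1] u by (simp add: power2_eq_square)
  have a2: "u*h \<le> 3/4" using mult_mono[OF u1 h1] u h by simp
  have a3: "h^2 \<le> 1/4" using mult_mono[OF h1 h1] h by (simp add: power2_eq_square)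
  have a4: "\<bar>2*c - \<epsilon>\<bar> \<le> 3" using c e by auto
  have a5: "\<bar>24*u + 36*h\<bar> \<le> 54" using u h1 h by auto
  have a6: "\<bar>(2*c - \<epsilon>)*(24*u + 36*h)\<bar> \<le> 3 * 54"
    unfolding abs_mult by (rule mult_mono[OF a4 a5]) auto
  have a7: "\<bar>c*(c - \<epsilon>)\<bar> \<le> 3/2 * (3/2)"
    unfolding abs_mult by (rule mult_mono) (use c e in auto)
  have p1: "0 \<le> u^2" "0 \<le> u*h" "0 \<le> h^2" using u h by auto
  show ?thesis using a1 a2 a3 a6 a7 p1 unfolding abs_le_iff by linarith
qed

lemma diff3_gfun:
  assumes lam: "0 \<le> lam" "lam \<le> 1" and e: "0 < \<epsilon>" "\<epsilon> \<le> 1/2"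
    and h: "0 < h" and x: "-1 \<le> x" "x + 3*h \<le> 1"
  shows "\<bar>diff3 (gfun lam \<epsilon>) h x\<bar> \<le> 1300 * h^3"
proof -
  consider "x + 3*h \<le> -1/2" | "-1/2 \<le> x" | "x < -1/2" "-1/2 < x + 3*h" by linarith
  then show ?thesis
  proof cases
    case 1
    then have "gfun lam \<epsilon> (x + real j * h) = 0" if "j \<le> 3" for j :: nat
    proof -
      have "x + real j * h \<le> x + 3 * h" using that h by (intro add_left_mono mult_right_mono) auto
      then have "max 0 (x + real j * h + 1/2) = 0" using 1 by auto
      then show ?thesis unfolding gfun_def by simp
    qed
    from this[of 0] this[of 1] this[of 2] this[of 3] show ?thesis
      unfolding diff3_def using h by (simp add: numeral_eq_Suc; simp add: algebra_simps)
  next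
    case 2
    define u where "u = x + 1/2"
    define c where "c = lam + 1/2"
    have gp: "gfun lam \<epsilon> y = (y + 1/2)^3 * ((y + 1/2 - c) * (y + 1/2 - c + \<epsilon>))" if "y \<ge> x" for y
      unfolding gfun_def c_def using that 2 by (simp add: algebra_simps)
    have "diff3 (gfun lam \<epsilon>) h x
       = h^3 * (60*u^2 + 180*(u*h) + 150*h^2 - (2*c - \<epsilon>)*(24*u + 36*h) + 6*(c*(c - \<epsilon>)))"
    proof -
      have "diff3 (gfun lam \<epsilon>) h x = (u + 3*h)^3 * ((u + 3*h - c) * (u + 3*h - c + \<epsilon>))
          - 3 * ((u + 2*h)^3 * ((u + 2*h - c) * (u + 2*h - c + \<epsilon>)))
          + 3 * ((u + h)^3 * ((u + h - c) * (u + h - c + \<epsilon>)))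
          - u^3 * ((u - c) * (u - c + \<epsilon>))"
        unfolding diff3_def using h by (simp add: gp u_def algebra_simps)
      also have "\<dots> = h^3 * (60*u^2 + 180*(u*h) + 150*h^2 - (2*c - \<epsilon>)*(24*u + 36*h) + 6*(c*(c - \<epsilon>)))"
        using diff3_poly_identity[of u h c \<epsilon>] by simp
      finally show ?thesis .
    qed
    moreover have "\<bar>60*u^2 + 180*(u*h) + 150*h^2 - (2*c - \<epsilon>)*(24*u + 36*h) + 6*(c*(c - \<epsilon>))\<bar> \<le> 1300"
      by (rule E_bound) (use 2 x h lam e in \<open>auto simp: u_def c_def\<close>)
    ultimately show ?thesis using h by (simp add: abs_mult mult.commute mult_left_mono)
  next
    case 3
    have pt: "\<bar>gfun lam \<epsilon> y\<bar> \<le> 135 * h^3" if "x \<le> y" "y \<le> x + 3*h" for y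
    proof -
      define m where "m = max 0 (y + 1/2)"
      have m0: "0 \<le> m" and m1: "m \<le> 3*h" unfolding m_def using that 3 h by auto
      have "m^3 \<le> (3*h)^3" by (rule power_mono[OF m1 m0])
      then have m3: "m^3 \<le> 27 * h^3" by (simp add: power_mult_distrib)
      have y1: "-1 \<le> y" "y \<le> 1" using that x by auto
      have q: "\<bar>(y - lam) * (y - lam + \<epsilon>)\<bar> \<le> 2 * (5/2)"
      proof -
        have q1: "\<bar>y - lam\<bar> \<le> 2" using y1 lam by (simp add: abs_le_iff)
        have q2: "\<bar>y - lam + \<epsilon>\<bar> \<le> 5/2" unfolding abs_le_iff using y1 lam e by linarith
        show ?thesis unfolding abs_mult by (rule mult_mono[OF q1 q2]) auto
      qed
      have "\<bar>gfun lam \<epsilon> y\<bar> = m^3 * \<bar>(y - lam) * (y - lam + \<epsilon>)\<bar>"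
        unfolding gfun_def m_def by (simp add: abs_mult)
      also have "\<dots> \<le> 27 * h^3 * 5" by (rule mult_mono[OF m3]) (use q h in auto)
      finally show ?thesis by simp
    qed
    have "\<bar>gfun lam \<epsilon> (x + 3*h)\<bar> \<le> 135 * h^3" "\<bar>gfun lam \<epsilon> (x + 2*h)\<bar> \<le> 135 * h^3"
         "\<bar>gfun lam \<epsilon> (x + h)\<bar> \<le> 135 * h^3" "\<bar>gfun lam \<epsilon> x\<bar> \<le> 135 * h^3"
      using pt h by auto
    then show ?thesis unfolding diff3_def abs_le_iff by linarith
  qed
qed

lemma omega3_ffun:
  assumes lam: "0 \<le> lam" "lam \<le> 1" and e: "0 < \<epsilon>" "\<epsilon> \<le> 1/2" and t: "0 < t"
  shows "omega3 (ffun lam \<epsilon>) t \<le> 4 * \<epsilon>^2 + 1300 * t^3"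
  unfolding omega3_def
proof (rule cSup_least)
  let ?h = "min t (2/3)"
  have "\<bar>diff3 (ffun lam \<epsilon>) ?h (-1)\<bar> \<in> {\<bar>diff3 (ffun lam \<epsilon>) h x\<bar> | h x. 0 < h \<and> h \<le> t \<and> -1 \<le> x \<and> x + 3*h \<le> 1}"
    by (intro CollectI exI[of _ ?h] exI[of _ "-1"]) (use t in auto)
  then show "{\<bar>diff3 (ffun lam \<epsilon>) h x\<bar> | h x. 0 < h \<and> h \<le> t \<and> -1 \<le> x \<and> x + 3*h \<le> 1} \<noteq> {}" by blast
next
  fix y assume "y \<in> {\<bar>diff3 (ffun lam \<epsilon>) h x\<bar> | h x. 0 < h \<and> h \<le> t \<and> -1 \<le> x \<and> x + 3*h \<le> 1}"
  then obtain h x where y: "y = \<bar>diff3 (ffun lam \<epsilon>) h x\<bar>" and h: "0 < h" "h \<le> t" and x: "-1 \<le> x" "x + 3*h \<le> 1"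
    by blast
  define b where "b z = ffun lam \<epsilon> z - gfun lam \<epsilon> z" for z
  have split: "diff3 (ffun lam \<epsilon>) h x = diff3 (gfun lam \<epsilon>) h x + diff3 b h x"
    unfolding diff3_def b_def by simp
  have bb: "0 \<le> b z \<and> b z \<le> \<epsilon>^2" if "x \<le> z" "z \<le> x + 3*h" for z
    unfolding b_def using ffun_minus_gfun[OF lam e, of z] that x by auto
  have "0 \<le> b (x + 3*h) \<and> b (x + 3*h) \<le> \<epsilon>^2" "0 \<le> b (x + 2*h) \<and> b (x + 2*h) \<le> \<epsilon>^2"
       "0 \<le> b (x + h) \<and> b (x + h) \<le> \<epsilon>^2" "0 \<le> b x \<and> b x \<le> \<epsilon>^2"
    using bb h by auto
  then have db: "\<bar>diff3 b h x\<bar> \<le> 4 * \<epsilon>^2" unfolding diff3_def abs_le_iff by linarith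
  have dg: "\<bar>diff3 (gfun lam \<epsilon>) h x\<bar> \<le> 1300 * h^3" by (rule diff3_gfun[OF lam e h(1) x])
  have "h^3 \<le> t^3" using h by (intro power_mono) auto
  then show "y \<le> 4 * \<epsilon>^2 + 1300 * t^3" unfolding y split using db dg by linarith
qed

lemma arith_int:
  fixes d n K \<eta> \<epsilon> :: real
  assumes d: "0 < d" "d \<le> 1" and n: "n \<ge> 1" and K: "K \<ge> 0" and KK: "K * (K + 1) \<le> 2 * \<eta> * n"
    and eta: "2000000000 * \<eta> < d^2" and e: "\<epsilon> = d / (768 * (K + 1) * n)"
  shows "6 * n * ((4 * K + 1) * \<epsilon>^2 + 10400 * K / n^3) / d < 3 * \<epsilon> / 32"
proof -
  have n0: "n > 0" using n by simp
  have K1: "K + 1 > 0" using K by simp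
  have e0: "\<epsilon> > 0" unfolding e using d n0 K1 by simp
  have ed: "\<epsilon> * (768 * (K + 1) * n) = d" unfolding e using n0 K1 by simp
  have T1: "6 * n * ((4 * K + 1) * \<epsilon>^2) / d \<le> \<epsilon> / 32"
  proof -
    have "6 * n * ((4 * K + 1) * \<epsilon>^2) \<le> 24 * n * (K + 1) * \<epsilon>^2"
      using n0 K e0 by (simp add: algebra_simps mult_left_mono)
    also have "\<dots> = \<epsilon> * (\<epsilon> * (768 * (K + 1) * n)) / 32" by (simp add: power2_eq_square algebra_simps)
    also have "\<dots> = \<epsilon> * d / 32" using ed by simp
    finally show ?thesis using d by (simp add: field_simps)
  qed
  have T2: "6 * n * (10400 * K / n^3) / d < \<epsilon> / 16"
  proof -
    have lhs: "6 * n * (10400 * K / n^3) / d = 62400 * K / (n^2 * d)" using n0 d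
      by (simp add: field_simps power2_eq_square power3_eq_cube)
    have "766771200 * (K * (K + 1)) \<le> 1533542400 * \<eta> * n" using KK by simp
    also have "\<dots> < d^2 * n"
    proof -
      have "0 \<le> K * (K + 1)" using K by simp
      then have "0 \<le> 2 * \<eta> * n" using KK by linarith
      then have "0 \<le> \<eta>" using n0 by (simp add: zero_le_mult_iff)
      then have "1533542400 * \<eta> < d^2" using eta by linarith
      then show ?thesis using n0 by (simp add: mult.commute mult.left_commute)
    qed
    finally have key: "766771200 * (K * (K + 1)) < d^2 * n" .
    have id: "\<epsilon> / 16 - 62400 * K / (n^2 * d) = (d^2 * n - 766771200 * (K * (K + 1))) / (12288 * (K + 1) * n^2 * d)"
    proof -
      have nz: "K + 1 \<noteq> 0" "1 + K \<noteq> 0" "n \<noteq> 0" "d \<noteq> 0" using K1 n0 d by auto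
      define D where "D = 12288 * (K + 1) * n^2 * d"
      have a: "\<epsilon> / 16 = d^2 * n / D"
      proof -
        have "d^2 * n / D = ((d*n) * d) / ((d*n) * (12288*(K+1)*n))" unfolding D_def by (simp add: power2_eq_square mult_ac)
        also have "\<dots> = d / (12288*(K+1)*n)" using nz by (subst mult_divide_mult_cancel_left) auto
        also have "\<dots> = \<epsilon> / 16" unfolding e by (simp add: divide_divide_eq_left mult_ac)
        finally show ?thesis by simp
      qed
      have b: "62400 * K / (n^2 * d) = 766771200 * (K * (K + 1)) / D"
      proof -
        have "766771200 * (K * (K + 1)) / D = ((12288*(K+1)) * (62400 * K)) / ((12288*(K+1)) * (n^2 * d))"
          unfolding D_def by (simp add: mult_ac)
        also have "\<dots> = 62400 * K / (n^2 * d)" using nz by (subst mult_divide_mult_cancel_left) auto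
        finally show ?thesis by simp
      qed
      show ?thesis unfolding a b D_def by (simp add: diff_divide_distrib)
    qed
    have "0 < (d^2 * n - 766771200 * (K * (K + 1))) / (12288 * (K + 1) * n^2 * d)"
      using key n0 d K1 by (intro divide_pos_pos) auto
    then show ?thesis unfolding lhs using id by linarith
  qed
  have "6 * n * ((4 * K + 1) * \<epsilon>^2 + 10400 * K / n^3) / d
      = 6 * n * ((4 * K + 1) * \<epsilon>^2) / d + 6 * n * (10400 * K / n^3) / d"
    by (simp add: algebra_simps add_divide_distrib)
  also have "\<dots> < \<epsilon> / 32 + \<epsilon> / 16" using T1 T2 by linarith
  also have "\<dots> = 3 * \<epsilon> / 32" by simp
  finally show ?thesis .
qed

lemma arith_end:
  fixes n K \<epsilon> :: real
  assumes n: "n \<ge> 10000000000" and K: "K \<ge> 0" and KK: "K * (K + 1) \<le> 2 * n"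
    and e: "\<epsilon> = 1 / (1620 * (K + 1) * n^2)"
  shows "81 * n^2 * ((4 * K + 1) * \<epsilon>^2 * n^4 + 54600 * K / n^2) < 2 * \<epsilon> * n^4"
proof -
  have n0: "n > 0" using n by simp
  have K1: "K + 1 > 0" using K by simp
  have e0: "\<epsilon> > 0" unfolding e using n0 K1 by simp
  have ed: "\<epsilon> * (1620 * (K + 1) * n^2) = 1" unfolding e using n0 K1 by simp
  have T1: "81 * n^2 * ((4 * K + 1) * \<epsilon>^2 * n^4) \<le> \<epsilon> * n^4 / 5"
  proof -
    have "81 * n^2 * ((4 * K + 1) * \<epsilon>^2 * n^4) \<le> 324 * (K + 1) * n^2 * \<epsilon>^2 * n^4"
      using n0 K e0 by (simp add: algebra_simps mult_left_mono)
    also have "\<dots> = (\<epsilon> * (1620 * (K + 1) * n^2)) * \<epsilon> * n^4 / 5" by (simp add: power2_eq_square algebra_simps)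
    also have "\<dots> = \<epsilon> * n^4 / 5" using ed by simp
    finally show ?thesis .
  qed
  have T2: "81 * n^2 * (54600 * K / n^2) < 9 * \<epsilon> * n^4 / 5"
  proof -
    have lhs: "81 * n^2 * (54600 * K / n^2) = 4422600 * K" using n0 by simp
    have en: "\<epsilon> * n^4 = n^2 / (1620 * (K + 1))"
    proof -
      have "\<epsilon> * n^4 = (n^2 * n^2) / (n^2 * (1620 * (K + 1)))" unfolding e
        by (simp add: mult_ac power4_eq_xxxx power2_eq_square)
      also have "\<dots> = n^2 / (1620 * (K + 1))" using n0 by (subst mult_divide_mult_cancel_left) auto
      finally show ?thesis .
    qed
    have "4422600 * K * (1620 * (K + 1)) * 5 = 35823060000 * (K * (K + 1))" by (simp add: algebra_simps)
    also have "\<dots> \<le> 35823060000 * (2 * n)" using KK by simp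
    also have "\<dots> < 9 * n^2"
    proof -
      have "71646120000 * n < 9 * n * n" using n n0 by simp
      then show ?thesis by (simp add: power2_eq_square)
    qed
    finally have "4422600 * K * (1620 * (K + 1)) * 5 < 9 * n^2" .
    then have "4422600 * K < 9 * (n^2 / (1620 * (K + 1))) / 5" using K1 by (simp add: field_simps)
    then have "4422600 * K < 9 * (\<epsilon> * n^4) / 5" by (subst en)
    then show ?thesis unfolding lhs by (simp add: mult.assoc)
  qed
  have "81 * n^2 * ((4 * K + 1) * \<epsilon>^2 * n^4 + 54600 * K / n^2)
      = 81 * n^2 * ((4 * K + 1) * \<epsilon>^2 * n^4) + 81 * n^2 * (54600 * K / n^2)"
    by (simp add: algebra_simps)
  also have "\<dots> < \<epsilon> * n^4 / 5 + 9 * \<epsilon> * n^4 / 5" using T1 T2 by linarith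
  also have "\<dots> = 2 * \<epsilon> * n^4" by simp
  finally show ?thesis .
qed

lemma arith_rho:
  fixes \<rho> S v n :: real
  assumes r0: "\<rho> \<ge> 0" and r2: "\<rho>^2 \<le> 4 * v / n^2 + 2 / n^4" and S0: "0 \<le> S" and S1: "S \<le> n^2"
    and v0: "v \<ge> 0" and vS: "v * S \<le> 2" and n: "n \<ge> 1"
  shows "\<rho>^3 * S^2 \<le> 42 / n^2"
proof -
  have n0: "n > 0" using n by simp
  have sq: "(\<rho>^3 * S^2)^2 \<le> 1764 / n^4"
  proof (cases "v * n^2 \<le> 1")
    case True
    then have "v \<le> 1 / n^2" using n0 by (simp add: field_simps)
    then have "4 * v / n^2 \<le> 4 * (1 / n^2) / n^2" using n0 by (intro divide_right_mono) auto
    then have "\<rho>^2 \<le> 4 * (1 / n^2) / n^2 + 2 / n^4" using r2 by linarith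
    also have "\<dots> = 6 / n^4" by (simp add: field_simps power2_eq_square power4_eq_xxxx)
    finally have r6: "\<rho>^2 \<le> 6 / n^4" .
    have "(\<rho>^3 * S^2)^2 = (\<rho>^2)^3 * (S^2)^2" by (simp add: power_mult_distrib flip: power_mult)
    also have "\<dots> \<le> (6 / n^4)^3 * (n^4)^2"
    proof (rule mult_mono)
      show "(\<rho>^2)^3 \<le> (6 / n^4)^3" by (rule power_mono[OF r6]) simp
      have "S^2 \<le> (n^2)^2" by (rule power_mono[OF S1 S0])
      then show "(S^2)^2 \<le> (n^4)^2" by (intro power_mono) (auto simp flip: power_mult)
    qed auto
    also have "\<dots> = 216 / n^4" using n0 by (simp add: field_simps power_mult_distrib flip: power_mult)
    also have "\<dots> \<le> 1764 / n^4" using n0 by (simp add: divide_right_mono)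
    finally show ?thesis .
  next
    case False
    then have vn: "1 / n^2 < v" using n0 by (simp add: field_simps)
    have "2 / n^4 \<le> 2 * v / n^2"
    proof -
      have "2 / n^4 = 2 * (1 / n^2) / n^2" by (simp add: field_simps power2_eq_square power4_eq_xxxx)
      also have "\<dots> \<le> 2 * v / n^2" using vn n0 by (intro divide_right_mono) auto
      finally show ?thesis .
    qed
    then have r6: "\<rho>^2 \<le> 6 * v / n^2" using r2 by simp
    have "(\<rho>^3 * S^2)^2 = (\<rho>^2)^3 * S^4" by (simp add: power_mult_distrib flip: power_mult)
    also have "\<dots> \<le> (6 * v / n^2)^3 * S^4"
      by (rule mult_right_mono[OF power_mono[OF r6]]) auto
    also have "\<dots> = 216 / (n^2)^3 * ((v * S)^3 * S)" by (simp add: power_divide power_mult_distrib eval_nat_numeral algebra_simps)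
    also have "\<dots> \<le> 216 / (n^2)^3 * (2^3 * n^2)"
    proof (rule mult_left_mono)
      show "(v * S)^3 * S \<le> 2^3 * n^2"
        by (rule mult_mono[OF power_mono[OF vS]]) (use v0 S0 S1 in auto)
    qed (use n0 in auto)
    also have "\<dots> = 1728 / n^4" using n0 by (simp add: eval_nat_numeral field_simps)
    also have "\<dots> \<le> 1764 / n^4" using n0 by (simp add: divide_right_mono)
    finally show ?thesis .
  qed
  have "(42 / n^2)^2 = 1764 / n^4" by (simp add: power_divide flip: power_mult)
  then have "(\<rho>^3 * S^2)^2 \<le> (42 / n^2)^2" using sq by simp
  moreover have "0 \<le> 42 / n^2" by simp
  ultimately show ?thesis by (rule power2_le_imp_le)
qed

definition ppoly :: "real \<Rightarrow> real \<Rightarrow> real poly" where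
  "ppoly lam \<epsilon> = [:1/2,1:]^3 * [:-lam,1:] * [:\<epsilon> - lam,1:]"

lemma poly_ppoly: "poly (ppoly lam \<epsilon>) x = (x + 1/2)^3 * ((x - lam) * (x - lam + \<epsilon>))"
  by (simp add: ppoly_def algebra_simps)

lemma degree_ppoly: "degree (ppoly lam \<epsilon>) \<le> 5"
proof -
  have "degree (ppoly lam \<epsilon>) \<le> degree ([:1/2,1:]^3 * [:-lam,1:]) + degree [:\<epsilon> - lam,1:]"
    unfolding ppoly_def by (rule degree_mult_le)
  also have "\<dots> \<le> (degree ([:1/2,1:]^3 :: real poly) + degree [:-lam,1:]) + 1"
    by (intro add_mono degree_mult_le) auto
  also have "\<dots> \<le> (3 * 1 + 1) + 1"
    using degree_power_le[of "[:1/2,1:] :: real poly" 3] by simp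
  finally show ?thesis by simp
qed

lemma pderiv_ppoly: "poly (pderiv (ppoly lam \<epsilon>)) lam = (lam + 1/2)^3 * \<epsilon>"
proof -
  have D1: "DERIV (poly (ppoly lam \<epsilon>)) lam :> poly (pderiv (ppoly lam \<epsilon>)) lam" by (rule poly_DERIV)
  have eq: "poly (ppoly lam \<epsilon>) = (\<lambda>x. (x + 1/2)^3 * ((x - lam) * (x - lam + \<epsilon>)))"
    by (rule ext) (rule poly_ppoly)
  have D2: "DERIV (\<lambda>x. (x + 1/2)^3 * ((x - lam) * (x - lam + \<epsilon>))) lam :> (lam + 1/2)^3 * \<epsilon>"
    by (rule derivative_eq_intros refl | simp)+
  show ?thesis using DERIV_unique[OF D1[unfolded eq] D2] .
qed

lemma one_minus_sq: "x \<in> {-1..1} \<Longrightarrow> 0 \<le> 1 - (x::real)^2"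
  using abs_square_le_1[of x] by (auto simp: abs_le_iff)

lemma rho_pos: "n \<ge> 1 \<Longrightarrow> x \<in> {-1..1} \<Longrightarrow> rho n x > 0"
  unfolding rho_def using one_minus_sq[of x] by (intro add_nonneg_pos) auto

lemma rho_le:
  assumes n: "n \<ge> 1" and x: "x \<in> {-1..1}"
  shows "rho n x \<le> 2 / real n"
proof -
  have n1: "real n \<ge> 1" using n by simp
  have "sqrt (1 - x^2) \<le> 1" by (simp add: real_sqrt_le_1_iff) 
  then have a: "sqrt (1 - x^2) / real n \<le> 1 / real n" using n1 by (intro divide_right_mono) auto
  have b: "1 / (real n)^2 \<le> 1 / real n" using n1 by (simp add: field_simps power2_eq_square)
  show ?thesis unfolding rho_def using a b by simp
qed

lemma rho_sq:
  assumes n: "n \<ge> 1" and x: "x \<in> {-1..1}"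
  shows "(rho n x)^2 \<le> 2 * (1 - x^2) / (real n)^2 + 2 / (real n)^4"
proof -
  have n1: "real n \<ge> 1" using n by simp
  have x2: "0 \<le> 1 - x^2" using one_minus_sq[OF x] .
  define a where "a = sqrt (1 - x^2) / real n"
  define b where "b = 1 / (real n)^2"
  have "(a + b)^2 \<le> 2 * a^2 + 2 * b^2"
  proof -
    have "0 \<le> (a - b)^2" by simp
    then show ?thesis by (simp add: power2_eq_square algebra_simps)
  qed
  moreover have "a^2 = (1 - x^2) / (real n)^2" unfolding a_def using x2 by (simp add: power_divide)
  moreover have "b^2 = 1 / (real n)^4" unfolding b_def by (simp add: power_divide flip: power_mult)
  ultimately show ?thesis unfolding rho_def a_def[symmetric] b_def[symmetric] by simp
qed

lemma h_bound:
  assumes lam: "0 \<le> lam" "lam \<le> 1" and e: "0 < \<epsilon>" "\<epsilon> \<le> 1/2" and n: "n \<ge> 1" and K: "K \<ge> 0"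
    and x: "-1/2 \<le> x" "x \<le> 1"
    and hyp: "\<bar>ffun lam \<epsilon> x - poly P x\<bar> \<le> K * omega3 (ffun lam \<epsilon>) (rho n x)"
  shows "\<bar>poly (P - ppoly lam \<epsilon>) x\<bar> \<le> K * (4 * \<epsilon>^2 + 1300 * (rho n x)^3) + \<epsilon>^2"
proof -
  have x1: "x \<in> {-1..1}" using x by auto
  have "omega3 (ffun lam \<epsilon>) (rho n x) \<le> 4 * \<epsilon>^2 + 1300 * (rho n x)^3"
    by (rule omega3_ffun[OF lam e rho_pos[OF n x1]])
  then have w: "K * omega3 (ffun lam \<epsilon>) (rho n x) \<le> K * (4 * \<epsilon>^2 + 1300 * (rho n x)^3)"
    using K by (intro mult_left_mono) auto
  have gp: "gfun lam \<epsilon> x = poly (ppoly lam \<epsilon>) x"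
    unfolding gfun_def poly_ppoly using x by simp
  have fg: "0 \<le> ffun lam \<epsilon> x - gfun lam \<epsilon> x" "ffun lam \<epsilon> x - gfun lam \<epsilon> x \<le> \<epsilon>^2"
    using ffun_minus_gfun[OF lam e x1] by auto
  have "\<bar>poly (P - ppoly lam \<epsilon>) x\<bar> \<le> \<bar>ffun lam \<epsilon> x - poly P x\<bar> + (ffun lam \<epsilon> x - gfun lam \<epsilon> x)"
    using fg gp by (simp add: abs_le_iff) linarith
  then show ?thesis using hyp w fg by linarith
qed

lemma ffun_props:
  assumes lam: "0 \<le> lam" "lam \<le> 1"
  shows "continuous_on {-1..1} (ffun lam \<epsilon>)" "\<forall>x\<in>{-1..1}. ffun lam \<epsilon> x \<ge> 0"
    "\<forall>x\<in>{-1..-1/2}. ffun lam \<epsilon> x = 0" "ffun lam \<epsilon> lam = 0"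
proof -
  show "continuous_on {-1..1} (ffun lam \<epsilon>)" unfolding ffun_def gfun_def by (intro continuous_intros)
  show "\<forall>x\<in>{-1..1}. ffun lam \<epsilon> x \<ge> 0" unfolding ffun_def by simp
  show "\<forall>x\<in>{-1..-1/2}. ffun lam \<epsilon> x = 0" unfolding ffun_def gfun_def by auto
  show "ffun lam \<epsilon> lam = 0" unfolding ffun_def gfun_def by simp
qed

lemma eta_K_bound:
  fixes \<eta> :: real and n :: nat
  assumes "0 \<le> \<eta>" "\<eta> \<le> 1" "n \<ge> 1"
  shows "(\<eta> * sqrt (real n)) * (\<eta> * sqrt (real n) + 1) \<le> 2 * \<eta> * real n"
proof -
  have n1: "real n \<ge> 1" using assms by simp
  have sq: "sqrt (real n) * sqrt (real n) = real n" by simp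
  have sn: "sqrt (real n) \<le> real n"
  proof -
    have "sqrt (real n) * 1 \<le> sqrt (real n) * sqrt (real n)"
      by (rule mult_left_mono) (use n1 in auto)
    then show ?thesis using sq by simp
  qed
  have e2: "\<eta> * \<eta> \<le> \<eta>" using assms by (simp add: mult_left_le)
  have "(\<eta> * sqrt (real n)) * (\<eta> * sqrt (real n) + 1) = (\<eta> * \<eta>) * real n + \<eta> * sqrt (real n)"
    using sq by (simp add: algebra_simps)
  also have "\<dots> \<le> \<eta> * real n + \<eta> * real n"
    using e2 sn assms n1 by (intro add_mono mult_right_mono mult_left_mono) auto
  finally show ?thesis by simp
qed

lemma deg_Q:
  assumes "degree P \<le> n" "n \<ge> 5"
  shows "degree (pcompose (P - ppoly lam \<epsilon>) [:1/4, 3/4:]) \<le> n"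
proof -
  have "degree (P - ppoly lam \<epsilon>) \<le> n" using assms degree_ppoly[of lam \<epsilon>] by (intro degree_diff_le) auto
  then show ?thesis by (simp add: degree_pcompose)
qed

lemma poly_Q: "poly (pcompose (p :: real poly) [:1/4, 3/4:]) s = poly p (1/4 + s * (3/4))"
  by (simp add: poly_pcompose)

lemma pderiv_Q: "poly (pderiv (pcompose (p :: real poly) [:1/4, 3/4:])) s = poly (pderiv p) (1/4 + s * (3/4)) * (3/4)"
  by (simp add: pderiv_pcompose poly_pcompose pderiv_pCons mult.commute)

lemma interior_case:
  fixes A lam :: real and n0 :: nat and \<alpha> :: "nat \<Rightarrow> real"
  assumes A: "A > 1" and lam: "0 \<le> lam" "lam < 1"
    and apos: "\<And>n. \<alpha> n > 0" and alim: "\<alpha> \<longlonglongrightarrow> 0"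
  shows "\<exists>n f. n \<ge> n0 \<and> n \<ge> 1 \<and>
           continuous_on {-1..1} f \<and>
           (\<forall>x\<in>{-1..1}. f x \<ge> 0) \<and>
           (\<forall>x\<in>{-1..-1/2}. f x = 0) \<and>
           (\<forall>P :: real poly. degree P \<le> n \<longrightarrow>
              (\<exists>e>0. \<forall>x\<in>{-1..1}. \<bar>x - lam\<bar> < e \<longrightarrow> poly P x \<ge> 0) \<longrightarrow>
              poly P lam = f lam \<longrightarrow>
              (\<exists>x\<in>{-1..1}. \<bar>f x - poly P x\<bar> > A * \<alpha> n * sqrt (real n) * omega3 f (rho n x)))"
proof -
  have lam1: "lam \<le> 1" using lam by simp
  define s0 where "s0 = (4*lam - 1)/3"
  define d where "d = min (1 - s0) (1 + s0)"
  have s0r: "-1 < s0" "s0 < 1" unfolding s0_def using lam by auto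
  have d0: "d > 0" unfolding d_def using s0r by auto
  have d1: "d \<le> 1" unfolding d_def by auto
  define \<eta>0 where "\<eta>0 = d^2 / 4000000000"
  have eta00: "\<eta>0 > 0" unfolding \<eta>0_def using d0 by simp
  have "eventually (\<lambda>n. \<alpha> n < \<eta>0 / A) sequentially"
    by (rule order_tendstoD(2)[OF alim]) (use eta00 A in simp)
  then obtain N0 where N0: "\<And>n. n \<ge> N0 \<Longrightarrow> \<alpha> n < \<eta>0 / A" by (auto simp: eventually_sequentially)
  define n where "n = max (max n0 N0) 5"
  have n5: "n \<ge> 5" and nn0: "n \<ge> n0" and nN0: "n \<ge> N0" unfolding n_def by auto
  have rn: "real n \<ge> 1" using n5 by simp
  define \<eta> where "\<eta> = A * \<alpha> n"
  have eta0: "\<eta> > 0" unfolding \<eta>_def using A apos[of n] by simp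
  have eta1: "\<eta> < \<eta>0" unfolding \<eta>_def using N0[OF nN0] A by (simp add: field_simps)
  have d2: "d^2 \<le> 1" using d0 d1 by (simp add: power_le_one)
  have eta_le1: "\<eta> \<le> 1" using eta1 d2 unfolding \<eta>0_def by simp
  have eta_small: "2000000000 * \<eta> < d^2" using eta1 eta0 d0 unfolding \<eta>0_def by simp
  define K where "K = A * \<alpha> n * sqrt (real n)"
  have KE: "K = \<eta> * sqrt (real n)" unfolding K_def \<eta>_def by simp
  have K0: "K \<ge> 0" unfolding KE using eta0 by simp
  have KK: "K * (K + 1) \<le> 2 * \<eta> * real n" unfolding KE
    by (rule eta_K_bound) (use eta0 eta_le1 n5 in auto)
  define \<epsilon> where "\<epsilon> = d / (768 * (K + 1) * real n)"
  have e0: "\<epsilon> > 0" unfolding \<epsilon>_def using d0 K0 rn by simp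
  have e1: "\<epsilon> \<le> 1/2"
  proof -
    have "1 * 1 \<le> (K + 1) * real n" using K0 rn by (intro mult_mono) auto
    from mult_left_mono[OF this, of 768] have "768 * (1 * 1) \<le> 768 * ((K + 1) * real n)" by simp
    then have "768 \<le> 768 * (K + 1) * real n" by (simp only: mult.assoc mult_1_right)
    then have "\<epsilon> \<le> d / 768" unfolding \<epsilon>_def using d0 by (intro divide_left_mono) auto
    then show ?thesis using d1 by simp
  qed
  define f where "f = ffun lam \<epsilon>"
  note fp = ffun_props[OF lam(1) lam1, of \<epsilon>]
  show ?thesis
  proof (intro exI[of _ n] exI[of _ f] conjI allI impI)
    show "n \<ge> n0" by (rule nn0)
    show "n \<ge> 1" using n5 by simp
    show "continuous_on {-1..1} f" unfolding f_def by (rule fp(1))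
    show "\<forall>x\<in>{-1..1}. f x \<ge> 0" unfolding f_def by (rule fp(2))
    show "\<forall>x\<in>{-1..-1/2}. f x = 0" unfolding f_def by (rule fp(3))
  next
    fix P :: "real poly"
    assume deg: "degree P \<le> n" and pos: "\<exists>e>0. \<forall>x\<in>{-1..1}. \<bar>x - lam\<bar> < e \<longrightarrow> poly P x \<ge> 0"
      and interp: "poly P lam = f lam"
    show "\<exists>x\<in>{-1..1}. \<bar>f x - poly P x\<bar> > A * \<alpha> n * sqrt (real n) * omega3 f (rho n x)"
    proof (rule ccontr)
      assume "\<not> ?thesis"
      then have hyp: "\<And>x. x \<in> {-1..1} \<Longrightarrow> \<bar>f x - poly P x\<bar> \<le> K * omega3 f (rho n x)"
        unfolding K_def by (auto simp: not_less)
      have P0: "poly P lam = 0" using interp fp(4) unfolding f_def by simp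
      obtain e where e: "e > 0" and epos: "\<forall>x\<in>{-1..1}. \<bar>x - lam\<bar> < e \<longrightarrow> poly P x \<ge> 0" using pos by blast
      have Pd: "poly (pderiv P) lam = 0"
      proof (rule DERIV_local_min[OF poly_DERIV])
        show "0 < min e (1 - lam)" using e lam by simp
        show "\<forall>y. \<bar>lam - y\<bar> < min e (1 - lam) \<longrightarrow> poly P lam \<le> poly P y"
        proof (intro allI impI)
          fix y assume y: "\<bar>lam - y\<bar> < min e (1 - lam)"
          then have "y \<in> {-1..1}" "\<bar>y - lam\<bar> < e" using lam by (auto simp: abs_less_iff)
          then show "poly P lam \<le> poly P y" using epos P0 by auto
        qed
      qed
      define Q where "Q = pcompose (P - ppoly lam \<epsilon>) [:1/4, 3/4:]"
      have degQ: "degree Q \<le> n" unfolding Q_def by (rule deg_Q[OF deg n5])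
      define Bi where "Bi = (4*K+1)*\<epsilon>^2 + 10400*K/(real n)^3"
      have bnd: "\<forall>s\<in>{-1..1}. \<bar>poly Q s\<bar> \<le> Bi"
      proof
        fix s :: real assume s: "s \<in> {-1..1}"
        define x where "x = 1/4 + s * (3/4)"
        have xr: "-1/2 \<le> x" "x \<le> 1" unfolding x_def using s by auto
        have x1: "x \<in> {-1..1}" using xr by auto
        have hb: "\<bar>poly (P - ppoly lam \<epsilon>) x\<bar> \<le> K * (4 * \<epsilon>^2 + 1300 * (rho n x)^3) + \<epsilon>^2"
          by (rule h_bound[OF lam(1) lam1 e0 e1 _ K0 xr]) (use n5 hyp[OF x1] in \<open>auto simp: f_def\<close>)
        have r0: "0 \<le> rho n x" using rho_pos[of n x] n5 x1 by simp
        have "(rho n x)^3 \<le> (2 / real n)^3" by (rule power_mono[OF rho_le r0]) (use n5 x1 in auto)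
        also have "(2 / real n)^3 = 8 / (real n)^3" by (simp add: power_divide)
        finally have r3: "(rho n x)^3 \<le> 8 / (real n)^3" .
        have "K * (4 * \<epsilon>^2 + 1300 * (rho n x)^3) \<le> K * (4 * \<epsilon>^2 + 1300 * (8 / (real n)^3))"
          using r3 K0 by (intro mult_left_mono) auto
        also have "\<dots> = 4 * K * \<epsilon>^2 + 10400 * K / (real n)^3" by (simp add: algebra_simps)
        finally have "\<bar>poly (P - ppoly lam \<epsilon>) x\<bar> \<le> 4 * K * \<epsilon>^2 + 10400 * K / (real n)^3 + \<epsilon>^2" using hb by linarith
        then show "\<bar>poly Q s\<bar> \<le> Bi" unfolding Q_def poly_Q Bi_def x_def[symmetric] by (simp add: algebra_simps)
      qed
      have bern: "\<bar>poly (pderiv Q) s0\<bar> \<le> 6 * real n * Bi / d"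
        unfolding d_def by (rule bernstein_interior[OF degQ _ bnd s0r]) (use n5 in simp)
      have xs0: "1/4 + s0 * (3/4) = lam" unfolding s0_def by (simp add: field_simps)
      have dQ: "poly (pderiv Q) s0 = - ((lam + 1/2)^3 * \<epsilon>) * (3/4)"
        unfolding Q_def pderiv_Q xs0 by (simp add: pderiv_diff Pd pderiv_ppoly)
      have c3: "(lam + 1/2)^3 \<ge> (1/2)^3" by (rule power_mono) (use lam in auto)
      have "3 * \<epsilon> / 32 \<le> (lam + 1/2)^3 * \<epsilon> * (3/4)"
      proof -
        have "(1/2)^3 * \<epsilon> \<le> (lam + 1/2)^3 * \<epsilon>" using c3 e0 by (intro mult_right_mono) auto
        moreover have "(1/2::real)^3 = 1/8" by (simp add: power3_eq_cube)
        ultimately have "\<epsilon> / 8 \<le> (lam + 1/2)^3 * \<epsilon>" by simp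
        then show ?thesis by linarith
      qed
      also have "\<dots> = \<bar>poly (pderiv Q) s0\<bar>" unfolding dQ using e0 lam by (simp add: abs_mult)
      also have "\<dots> \<le> 6 * real n * Bi / d" by (rule bern)
      also have "\<dots> < 3 * \<epsilon> / 32" unfolding Bi_def
        by (rule arith_int[OF d0 d1 rn K0 KK eta_small \<epsilon>_def])
      finally show False by simp
    qed
  qed
qed

lemma endpoint_case:
  fixes A :: real and n0 :: nat and \<alpha> :: "nat \<Rightarrow> real"
  assumes A: "A > 1" and apos: "\<And>n. \<alpha> n > 0" and alim: "\<alpha> \<longlonglongrightarrow> 0"
  shows "\<exists>n f. n \<ge> n0 \<and> n \<ge> 1 \<and>
           continuous_on {-1..1} f \<and>
           (\<forall>x\<in>{-1..1}. f x \<ge> 0) \<and>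
           (\<forall>x\<in>{-1..-1/2}. f x = 0) \<and>
           (\<forall>P :: real poly. degree P \<le> n \<longrightarrow>
              (\<exists>e>0. \<forall>x\<in>{-1..1}. \<bar>x - 1\<bar> < e \<longrightarrow> poly P x \<ge> 0) \<longrightarrow>
              poly P 1 = f 1 \<longrightarrow>
              (\<exists>x\<in>{-1..1}. \<bar>f x - poly P x\<bar> > A * \<alpha> n * sqrt (real n) * omega3 f (rho n x)))"
proof -
  have "eventually (\<lambda>n. \<alpha> n < 1 / A) sequentially"
    by (rule order_tendstoD(2)[OF alim]) (use A in simp)
  then obtain N0 where N0: "\<And>n. n \<ge> N0 \<Longrightarrow> \<alpha> n < 1 / A" by (auto simp: eventually_sequentially)
  define n where "n = max (max n0 N0) 10000000000"
  have nbig: "n \<ge> 10000000000" and nn0: "n \<ge> n0" and nN0: "n \<ge> N0" unfolding n_def by auto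
  have n5: "n \<ge> 5" using nbig by simp
  have rn: "real n \<ge> 1" using n5 by simp
  have rnbig: "real n \<ge> 10000000000" using nbig by simp
  define \<eta> where "\<eta> = A * \<alpha> n"
  have eta0: "\<eta> > 0" unfolding \<eta>_def using A apos[of n] by simp
  have eta1: "\<eta> < 1" unfolding \<eta>_def using N0[OF nN0] A by (simp add: field_simps)
  define K where "K = A * \<alpha> n * sqrt (real n)"
  have KE: "K = \<eta> * sqrt (real n)" unfolding K_def \<eta>_def by simp
  have K0: "K \<ge> 0" unfolding KE using eta0 by simp
  have KK0: "K * (K + 1) \<le> 2 * \<eta> * real n" unfolding KE
    by (rule eta_K_bound) (use eta0 eta1 n5 in auto)
  have KK: "K * (K + 1) \<le> 2 * real n"
  proof -
    have "2 * \<eta> * real n \<le> 2 * 1 * real n" using eta1 rn by (intro mult_right_mono mult_left_mono) auto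
    then show ?thesis using KK0 by simp
  qed
  define \<epsilon> where "\<epsilon> = 1 / (1620 * (K + 1) * (real n)^2)"
  have e0: "\<epsilon> > 0" unfolding \<epsilon>_def using K0 rn by simp
  have e1: "\<epsilon> \<le> 1/2"
  proof -
    have "1 * 1 \<le> (K + 1) * (real n)^2" using K0 rn by (intro mult_mono) auto
    from mult_left_mono[OF this, of 1620] have "1620 * (1 * 1) \<le> 1620 * ((K + 1) * (real n)^2)" by simp
    then have "1620 \<le> 1620 * (K + 1) * (real n)^2" by (simp only: mult.assoc mult_1_right)
    then have "\<epsilon> \<le> 1 / 1620" unfolding \<epsilon>_def by (intro divide_left_mono) auto
    then show ?thesis by simp
  qed
  define f where "f = ffun 1 \<epsilon>"
  note fp = ffun_props[of 1 \<epsilon>, OF zero_le_one order_refl]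
  show ?thesis
  proof (intro exI[of _ n] exI[of _ f] conjI allI impI)
    show "n \<ge> n0" by (rule nn0)
    show "n \<ge> 1" using n5 by simp
    show "continuous_on {-1..1} f" unfolding f_def by (rule fp(1))
    show "\<forall>x\<in>{-1..1}. f x \<ge> 0" unfolding f_def by (rule fp(2))
    show "\<forall>x\<in>{-1..-1/2}. f x = 0" unfolding f_def by (rule fp(3))
  next
    fix P :: "real poly"
    assume deg: "degree P \<le> n" and pos: "\<exists>e>0. \<forall>x\<in>{-1..1}. \<bar>x - 1\<bar> < e \<longrightarrow> poly P x \<ge> 0"
      and interp: "poly P 1 = f 1"
    show "\<exists>x\<in>{-1..1}. \<bar>f x - poly P x\<bar> > A * \<alpha> n * sqrt (real n) * omega3 f (rho n x)"
    proof (rule ccontr)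
      assume "\<not> ?thesis"
      then have hyp: "\<And>x. x \<in> {-1..1} \<Longrightarrow> \<bar>f x - poly P x\<bar> \<le> K * omega3 f (rho n x)"
        unfolding K_def by (auto simp: not_less)
      have P0: "poly P 1 = 0" using interp fp(4) unfolding f_def by simp
      obtain e where e: "e > 0" and epos: "\<forall>x\<in>{-1..1}. \<bar>x - 1\<bar> < e \<longrightarrow> poly P x \<ge> 0" using pos by blast
      have Pd: "poly (pderiv P) 1 \<le> 0"
      proof (rule ccontr)
        assume "\<not> poly (pderiv P) 1 \<le> 0"
        then have "0 < poly (pderiv P) 1" by simp
        from DERIV_pos_inc_left[OF poly_DERIV this] obtain dd where dd: "dd > 0"
          and inc: "\<forall>h>0. h < dd \<longrightarrow> poly P (1 - h) < poly P 1" by blast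
        define h where "h = min (min dd e) 1 / 2"
        have h0: "h > 0" "h < dd" "h < e" "h \<le> 1/2" unfolding h_def using dd e by auto
        have "poly P (1 - h) < 0" using inc h0 P0 by auto
        moreover have "poly P (1 - h) \<ge> 0" using epos h0 by auto
        ultimately show False by simp
      qed
      define Q where "Q = pcompose (P - ppoly 1 \<epsilon>) [:1/4, 3/4:]"
      have degQ: "degree Q \<le> n" unfolding Q_def by (rule deg_Q[OF deg n5])
      define S where "S = chebS n"
      define G where "G = Q * S^2"
      have degG: "degree G \<le> 3 * n"
      proof -
        have "degree G \<le> degree Q + degree (S^2)" unfolding G_def by (rule degree_mult_le)
        also have "degree (S^2) \<le> degree S * 2" by (rule degree_power_le)
        also have "degree S \<le> n" unfolding S_def by (rule degree_chebS)
        finally show ?thesis using degQ by simp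
      qed
      define Be where "Be = (4*K+1)*\<epsilon>^2*(real n)^4 + 54600*K/(real n)^2"
      have bnd: "\<forall>s\<in>{-1..1}. \<bar>poly G s\<bar> \<le> Be"
      proof
        fix s :: real assume s: "s \<in> {-1..1}"
        define x where "x = 1/4 + s * (3/4)"
        have xr: "-1/2 \<le> x" "x \<le> 1" unfolding x_def using s by auto
        have x1: "x \<in> {-1..1}" using xr by auto
        define \<rho> where "\<rho> = rho n x"
        define \<sigma> where "\<sigma> = poly S s"
        have hb: "\<bar>poly Q s\<bar> \<le> K * (4 * \<epsilon>^2 + 1300 * \<rho>^3) + \<epsilon>^2"
          unfolding Q_def poly_Q x_def[symmetric] \<rho>_def
          by (rule h_bound[of 1 \<epsilon> n K x P, OF _ _ e0 e1 _ K0 xr]) (use n5 hyp[OF x1] in \<open>auto simp: f_def\<close>)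
        have r0: "0 \<le> \<rho>" unfolding \<rho>_def using rho_pos[of n x] n5 x1 by simp
        have sb: "0 \<le> \<sigma>" "\<sigma> \<le> (real n)^2" "(1 - s) * \<sigma> \<le> 2"
          unfolding \<sigma>_def S_def using chebS_bounds[OF s, of n] by auto
        have r2: "\<rho>^2 \<le> 4 * (1 - s) / (real n)^2 + 2 / (real n)^4"
        proof -
          have "\<rho>^2 \<le> 2 * (1 - x^2) / (real n)^2 + 2 / (real n)^4" unfolding \<rho>_def by (rule rho_sq) (use n5 x1 in auto)
          moreover have "2 * (1 - x^2) / (real n)^2 \<le> 4 * (1 - s) / (real n)^2"
          proof (rule divide_right_mono)
            have "1 - x^2 = (1 - x) * (1 + x)" by (simp add: power2_eq_square algebra_simps)
            also have "\<dots> \<le> (1 - x) * 2" using xr by (intro mult_left_mono) auto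
            also have "\<dots> \<le> 2 * (1 - s)" unfolding x_def using s by auto
            finally show "2 * (1 - x^2) \<le> 4 * (1 - s)" by simp
          qed simp
          ultimately show ?thesis by simp
        qed
        have rs: "\<rho>^3 * \<sigma>^2 \<le> 42 / (real n)^2"
          by (rule arith_rho[OF r0 r2 sb(1) sb(2) _ _ rn]) (use s sb(3) in auto)
        have s4: "\<sigma>^2 \<le> (real n)^4"
        proof -
          have "\<sigma>^2 \<le> ((real n)^2)^2" by (rule power_mono[OF sb(2) sb(1)])
          then show ?thesis by (simp flip: power_mult)
        qed
        have "\<bar>poly G s\<bar> = \<bar>poly Q s\<bar> * \<sigma>^2" unfolding G_def \<sigma>_def by (simp add: abs_mult)
        also have "\<dots> \<le> (K * (4 * \<epsilon>^2 + 1300 * \<rho>^3) + \<epsilon>^2) * \<sigma>^2"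
          by (rule mult_right_mono[OF hb]) simp
        also have "\<dots> = (4*K+1)*\<epsilon>^2 * \<sigma>^2 + 1300 * K * (\<rho>^3 * \<sigma>^2)" by (simp add: algebra_simps)
        also have "\<dots> \<le> (4*K+1)*\<epsilon>^2 * (real n)^4 + 1300 * K * (42 / (real n)^2)"
          using s4 rs K0 by (intro add_mono mult_left_mono) auto
        also have "\<dots> = Be" unfolding Be_def by simp
        finally show "\<bar>poly G s\<bar> \<le> Be" .
      qed
      have mk: "\<bar>poly (pderiv G) 1\<bar> \<le> 9 * (real (3 * n))^2 * Be"
        by (rule markov_endpoint[OF degG _ bnd]) (use n5 in simp)
      have Q1: "poly Q 1 = 0" unfolding Q_def poly_Q using P0 by (simp add: poly_ppoly)
      have dQ: "poly (pderiv Q) 1 = (poly (pderiv P) 1 - (3/2)^3 * \<epsilon>) * (3/4)"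
        unfolding Q_def pderiv_Q using pderiv_ppoly[of 1 \<epsilon>] by (simp add: pderiv_diff)
      have S1: "poly S 1 = (real n)^2" unfolding S_def by (rule chebS_one)
      have dG: "poly (pderiv G) 1 = (real n)^4 * ((poly (pderiv P) 1 - (3/2)^3 * \<epsilon>) * (3/4))"
        unfolding G_def pderiv_mult using Q1 dQ S1 by (simp flip: power_mult)
      have "2 * \<epsilon> * (real n)^4 \<le> \<bar>poly (pderiv G) 1\<bar>"
      proof -
        have c: "(3/2::real)^3 = 27/8" by (simp add: power3_eq_cube)
        have "2 * \<epsilon> \<le> ((3/2)^3 * \<epsilon> - poly (pderiv P) 1) * (3/4)" unfolding c using Pd e0 by (simp add: algebra_simps; linarith)
        also have "\<dots> = \<bar>(poly (pderiv P) 1 - (3/2)^3 * \<epsilon>) * (3/4)\<bar>"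
        proof -
          have neg: "poly (pderiv P) 1 - (3/2)^3 * \<epsilon> \<le> 0" using Pd e0 unfolding c by simp
          have "\<bar>(poly (pderiv P) 1 - (3/2)^3 * \<epsilon>) * (3/4)\<bar> = (- (poly (pderiv P) 1 - (3/2)^3 * \<epsilon>)) * (3/4)"
            unfolding abs_mult abs_of_nonpos[OF neg] by simp
          then show ?thesis by simp
        qed
        finally have "2 * \<epsilon> * (real n)^4 \<le> \<bar>(poly (pderiv P) 1 - (3/2)^3 * \<epsilon>) * (3/4)\<bar> * (real n)^4"
          by (intro mult_right_mono) auto
        then show ?thesis unfolding dG by (simp add: abs_mult mult.commute)
      qed
      also have "\<dots> \<le> 9 * (real (3 * n))^2 * Be" by (rule mk)
      also have "9 * (real (3 * n))^2 * Be = 81 * (real n)^2 * Be" by (simp add: power_mult_distrib)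
      also have "\<dots> < 2 * \<epsilon> * (real n)^4" unfolding Be_def
        by (rule arith_end[OF rnbig K0 KK \<epsilon>_def])
      finally show False by simp
    qed
  qed
qed

theorem lemma3p4:
  fixes A lam :: real and n0 :: nat and \<alpha> :: "nat \<Rightarrow> real"
  assumes "A > 1" and "0 \<le> lam" and "lam \<le> 1"
    and "\<And>n. \<alpha> n > 0" and "\<alpha> \<longlonglongrightarrow> 0"
  shows "\<exists>n f. n \<ge> n0 \<and> n \<ge> 1 \<and>
           continuous_on {-1..1} f \<and>
           (\<forall>x\<in>{-1..1}. f x \<ge> 0) \<and>
           (\<forall>x\<in>{-1..-1/2}. f x = 0) \<and>
           (\<forall>P :: real poly. degree P \<le> n \<longrightarrow>
              (\<exists>e>0. \<forall>x\<in>{-1..1}. \<bar>x - lam\<bar> < e \<longrightarrow> poly P x \<ge> 0) \<longrightarrow>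
              poly P lam = f lam \<longrightarrow>
              (\<exists>x\<in>{-1..1}. \<bar>f x - poly P x\<bar> > A * \<alpha> n * sqrt (real n) * omega3 f (rho n x)))"
proof (cases "lam < 1")
  case True
  show ?thesis by (rule interior_case[OF assms(1) assms(2) True assms(4) assms(5)])
next
  case False
  then have l1: "lam = 1" using assms(3) by simp
  show ?thesis unfolding l1 by (rule endpoint_case[OF assms(1) assms(4) assms(5)])
qed

end
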